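(* Consider any sequences evolved by Algorithm 1, with $\gamma_k,\Gamma_k,\beta_k$ as in the context. For $k\ge0$ and $x\in\mathcal H$ put $\tilde x:=\frac{a_{k+1}}{A_{k+1}}x+\frac{A_k}{A_{k+1}}y^k$, $z^k:=\frac{a_{k+1}}{A_{k+1}}x^k+\frac{A_k}{A_{k+1}}y^k$ and $\Delta_k:=\frac{(1+\mu A_k)A_{k+1}}{2a_{k+1}^2}\|\tilde x-z^k\|^2+\frac{\mu A_k}{2a_{k+1}}\|\tilde x-y^k\|^2$. Then for all $k\ge0$ and $x\in\mathcal H$: (a) $a_{k+1}\gamma_{k+1}(x)+A_k\gamma_{k+1}(y^k)=A_{k+1}\gamma_{k+1}(\tilde x)+\frac{\mu a_{k+1}A_k}{2A_{k+1}}\|x-y^k\|^2$; (b) $A_kh(y^k)+A_{k+1}\Gamma_{k+1}(x)+\frac12\|x-x^0\|^2\ge\beta_k+A_{k+1}[\gamma_{k+1}(\tilde x)+\Delta_k]$; (c) $\Delta_k=\frac{1}{2\lambda_{k+1}}\Big[\|\tilde x-\tilde x^k\|^2+\frac{\mu(1+\mu A_k)\lambda_{k+1}^2A_k}{a_{k+1}A_{k+1}}\|x^k-y^k\|^2\Big]$; (d) $A_kh(y^k)+A_{k+1}\Gamma_{k+1}(x)+\frac12\|x-x^0\|^2\ge\beta_k+A_{k+1}h(y^{k+1})+\frac{1-\sigma^2}{2}\cdot\frac{A_{k+1}}{\lambda_{k+1}}\|y^{k+1}-\tilde x^k\|^2+\frac{\mu(1+\mu A_k)\lambda_{k+1}A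_k}{2a_{k+1}}\|x^k-y^k\|^2$.
   Context: Setting: $\mathcal H$ is a finite-dimensional real inner product space with inner product $\langle\cdot,\cdot\rangle$ and norm $\|\cdot\|$. $f,g:\mathcal H\to(-\infty,\infty]$ are proper, closed, convex functions, $h:=f+g$ has nonempty domain, and $g$ is $\mu$-strongly convex for some $\mu>0$, i.e. $g(tx+(1-t)y)\le tg(x)+(1-t)g(y)-\frac{\mu}{2}t(1-t)\|x-y\|^2$ for all $x,y\in\mathcal H$, $t\in[0,1]$. $x^*$ denotes the unique minimizer of $h$. For $\varepsilon\ge 0$, $\partial_\varepsilon f(y):=\{u\in\mathcal H: f(w)\ge f(y)+\langle u,w-y\rangle-\varepsilon\ \forall w\in\mathcal H\}$, and $\partial g:=\partial_0 g$. Algorithm 1: Choose $x^0,y^0\in\mathcal H$ and $\sigma\in[0,1]$, and set $A_0=0$. For $k=0,1,2,\dots$: choose $\lambda_{k+1}>0$, set $a_{k+1}=\frac{(1+2\mu A_k)\lambda_{k+1}+\sqrt{(1+2\mu A_k)^2\lambda_{k+1}^2+4(1+\mu A_k)A_k\lambda_{k+1}}}{2}$ and $\tilde x^k=\frac{a_{k+1}-\mu A_k\lambda_{k+1}}{A_k+a_{k+1}}x^k+\frac{A_k+\mu A_k\lambda_{k+1}}{A_k+a_{k+1}}y^k$; compute $(y^{k+1},v^{k+1},\varepsilon_{k+1})\in\mathcal H\times\mathcal H\times[0,\infty)$ such that $v^{k+1}\in\partial_{\varepsilon_{k+1}}f(y^{k+1})+\partial g(y^{k+1})$ and $\frac{\|\lambda_{k+1}v^{k+1}+y^{k+1}-\tilde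 x^k\|^2}{1+\lambda_{k+1}\mu}+2\lambda_{k+1}\varepsilon_{k+1}\le\sigma^2\|y^{k+1}-\tilde x^k\|^2$; then set $A_{k+1}=A_k+a_{k+1}$ and $x^{k+1}=\frac{1+\mu A_k}{1+\mu A_{k+1}}x^k+\frac{\mu a_{k+1}}{1+\mu A_{k+1}}y^{k+1}-\frac{a_{k+1}}{1+\mu A_{k+1}}v^{k+1}$. "Sequences evolved by Algorithm 1" means any sequences satisfying all these relations for every $k\ge 0$. Auxiliary functions: for $k\ge1$ and $x\in\mathcal H$, $\gamma_k(x):=h(y^k)+\langle v^k,x-y^k\rangle-\varepsilon_k+\frac{\mu}{2}\|x-y^k\|^2$; $\Gamma_0\equiv 0$ and, for $k\ge1$, $\Gamma_k(x):=\sum_{j=1}^k\frac{a_j}{A_k}\gamma_j(x)$ (so $A_k\Gamma_k=\sum_{j=1}^k a_j\gamma_j$). For $k\ge0$, $\beta_k:=\inf_{x\in\mathcal H}\{A_k\Gamma_k(x)+\frac12\|x-x^0\|^2\}$ (so $\beta_0=0$). *)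

theory Defs
  imports "HOL-Analysis.Analysis" "HOL-Library.Extended_Real"
begin

definition proper_fun :: "('a \<Rightarrow> ereal) \<Rightarrow> bool" where
  "proper_fun f \<longleftrightarrow> (\<forall>x. f x \<noteq> -\<infinity>) \<and> (\<exists>x. f x \<noteq> \<infinity>)"

definition epigraph_e :: "('a \<Rightarrow> ereal) \<Rightarrow> ('a \<times> real) set" where
  "epigraph_e f = {(x, t). f x \<le> ereal t}"

definition closed_fun :: "('a::topological_space \<Rightarrow> ereal) \<Rightarrow> bool" where
  "closed_fun f \<longleftrightarrow> closed (epigraph_e f)"

definition convex_fun :: "('a::real_vector \<Rightarrow> ereal) \<Rightarrow> bool" where
  "convex_fun f \<longleftrightarrow> convex (epigraph_e f)"

definition strongly_convex_fun :: "real \<Rightarrow> ('a::real_normed_vector \<Rightarrow> ereal) \<Rightarrow> bool" where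
  "strongly_convex_fun \<mu> g \<longleftrightarrow>
     (\<forall>x y t. 0 \<le> t \<and> t \<le> 1 \<longrightarrow>
        g (t *\<^sub>R x + (1 - t) *\<^sub>R y)
          \<le> ereal t * g x + ereal (1 - t) * g y - ereal (\<mu> / 2 * t * (1 - t) * norm (x - y)^2))"

definition eps_subdiff :: "('a::real_inner \<Rightarrow> ereal) \<Rightarrow> real \<Rightarrow> 'a \<Rightarrow> 'a set" where
  "eps_subdiff f \<epsilon> y = {u. \<forall>w. f w \<ge> f y + ereal (inner u (w - y)) - ereal \<epsilon>}"

definition subdiff :: "('a::real_inner \<Rightarrow> ereal) \<Rightarrow> 'a \<Rightarrow> 'a set" where
  "subdiff f y = eps_subdiff f 0 y"

definition algorithm1 ::
  "('a::euclidean_space \<Rightarrow> ereal) \<Rightarrow> ('a \<Rightarrow> ereal) \<Rightarrow> real \<Rightarrow> real \<Rightarrow>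
   (nat \<Rightarrow> 'a) \<Rightarrow> (nat \<Rightarrow> 'a) \<Rightarrow> (nat \<Rightarrow> 'a) \<Rightarrow> (nat \<Rightarrow> real) \<Rightarrow> (nat \<Rightarrow> real) \<Rightarrow>
   (nat \<Rightarrow> real) \<Rightarrow> (nat \<Rightarrow> real) \<Rightarrow> (nat \<Rightarrow> 'a) \<Rightarrow> bool" where
  "algorithm1 f g \<mu> \<sigma> x y v eps lam a A xt \<longleftrightarrow>
     0 \<le> \<sigma> \<and> \<sigma> \<le> 1 \<and> A 0 = 0 \<and>
     (\<forall>k. lam (Suc k) > 0 \<and>
       a (Suc k) = ((1 + 2 * \<mu> * A k) * lam (Suc k)
                    + sqrt (((1 + 2 * \<mu> * A k) * lam (Suc k))^2
                            + 4 * (1 + \<mu> * A k) * A k * lam (Suc k))) / 2 \<and>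
       xt k = ((a (Suc k) - \<mu> * A k * lam (Suc k)) / (A k + a (Suc k))) *\<^sub>R x k
              + ((A k + \<mu> * A k * lam (Suc k)) / (A k + a (Suc k))) *\<^sub>R y k \<and>
       eps (Suc k) \<ge> 0 \<and>
       (\<exists>u w. u \<in> eps_subdiff f (eps (Suc k)) (y (Suc k)) \<and> w \<in> subdiff g (y (Suc k))
              \<and> v (Suc k) = u + w) \<and>
       norm (lam (Suc k) *\<^sub>R v (Suc k) + y (Suc k) - xt k)^2 / (1 + lam (Suc k) * \<mu>)
         + 2 * lam (Suc k) * eps (Suc k) \<le> \<sigma>^2 * norm (y (Suc k) - xt k)^2 \<and>
       A (Suc k) = A k + a (Suc k) \<and>
       x (Suc k) = ((1 + \<mu> * A k) / (1 + \<mu> * A (Suc k))) *\<^sub>R x k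
                   + (\<mu> * a (Suc k) / (1 + \<mu> * A (Suc k))) *\<^sub>R y (Suc k)
                   - (a (Suc k) / (1 + \<mu> * A (Suc k))) *\<^sub>R v (Suc k))"

text \<open>gamma_k(z) = h(y^k) + <v^k, z - y^k> - eps_k + mu/2 |z - y^k|^2, with h = f + g
  (meaningful for k >= 1).\<close>
definition gam :: "('a::real_inner \<Rightarrow> ereal) \<Rightarrow> ('a \<Rightarrow> ereal) \<Rightarrow> real \<Rightarrow>
   (nat \<Rightarrow> 'a) \<Rightarrow> (nat \<Rightarrow> 'a) \<Rightarrow> (nat \<Rightarrow> real) \<Rightarrow> nat \<Rightarrow> 'a \<Rightarrow> ereal" where
  "gam f g \<mu> y v eps k z =
     (f (y k) + g (y k)) + ereal (inner (v k) (z - y k) - eps k + \<mu> / 2 * norm (z - y k)^2)"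

definition Gam :: "('a::real_inner \<Rightarrow> ereal) \<Rightarrow> ('a \<Rightarrow> ereal) \<Rightarrow> real \<Rightarrow>
   (nat \<Rightarrow> 'a) \<Rightarrow> (nat \<Rightarrow> 'a) \<Rightarrow> (nat \<Rightarrow> real) \<Rightarrow> (nat \<Rightarrow> real) \<Rightarrow> (nat \<Rightarrow> real) \<Rightarrow>
   nat \<Rightarrow> 'a \<Rightarrow> ereal" where
  "Gam f g \<mu> y v eps a A k z =
     (if k = 0 then 0 else (\<Sum>j\<in>{1..k}. ereal (a j / A k) * gam f g \<mu> y v eps j z))"

definition bet :: "('a::real_inner \<Rightarrow> ereal) \<Rightarrow> ('a \<Rightarrow> ereal) \<Rightarrow> real \<Rightarrow>
   (nat \<Rightarrow> 'a) \<Rightarrow> (nat \<Rightarrow> 'a) \<Rightarrow> (nat \<Rightarrow> 'a) \<Rightarrow> (nat \<Rightarrow> real) \<Rightarrow> (nat \<Rightarrow> real) \<Rightarrow> (nat \<Rightarrow> real) \<Rightarrow>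
   nat \<Rightarrow> ereal" where
  "bet f g \<mu> x y v eps a A k =
     (INF z. ereal (A k) * Gam f g \<mu> y v eps a A k z + ereal (1/2 * norm (z - x 0)^2))"

end

theory Submission
  imports Defs
begin

lemma lim_le_aux:
  fixes X Y c :: real
  assumes "\<And>t. 0 < t \<Longrightarrow> t \<le> 1 \<Longrightarrow> Y - t * c \<le> X" "0 \<le> c"
  shows "Y \<le> X"
proof (rule ccontr)
  assume "\<not> Y \<le> X"
  define t where "t = min 1 ((Y - X) / (c + 1))"
  have t0: "0 < t" "t \<le> 1" using \<open>\<not> Y \<le> X\<close> assms(2) by (auto simp: t_def)
  have "t * c \<le> (Y - X) / (c + 1) * c" using assms(2) t0 by (intro mult_right_mono) (auto simp: t_def)
  also have "\<dots> < Y - X" using assms(2) \<open>\<not> Y \<le> X\<close> by (simp add: field_simps)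
  finally show False using assms(1)[OF t0] by linarith
qed

lemma sqexp: fixes p q :: "'a::real_inner" shows "norm (p + q)^2 = norm p ^2 + 2 * inner p q + norm q ^2"
  by (simp add: power2_norm_eq_inner inner_add_left inner_add_right inner_commute)

lemma quad_min:
  fixes p q c w :: "'a::real_inner" and \<alpha> \<beta> :: real
  assumes "\<alpha> + \<beta> \<noteq> 0"
  defines "m \<equiv> (\<alpha>/(\<alpha>+\<beta>)) *\<^sub>R p + (\<beta>/(\<alpha>+\<beta>)) *\<^sub>R q - (1/(\<alpha>+\<beta>)) *\<^sub>R c"
  defines "\<Phi> \<equiv> (\<lambda>w. \<alpha>/2 * norm (w - p)^2 + \<beta>/2 * norm (w - q)^2 + inner c (w - q))"
  shows "\<Phi> w = \<Phi> m + (\<alpha>+\<beta>)/2 * norm (w - m)^2"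
proof -
  define d where "d = w - m"
  have wm: "w = m + d" by (simp add: d_def)
  have key: "\<alpha> *\<^sub>R (m - p) + \<beta> *\<^sub>R (m - q) + c = 0"
  proof -
    have "(\<alpha>+\<beta>) *\<^sub>R m = \<alpha> *\<^sub>R p + \<beta> *\<^sub>R q - c"
      using assms(1) by (simp add: m_def scaleR_diff_right scaleR_add_right)
    thus ?thesis by (simp add: algebra_simps)
  qed
  have "inner (\<alpha> *\<^sub>R (m - p) + \<beta> *\<^sub>R (m - q) + c) d = 0" by (simp add: key)
  hence lin: "\<alpha> * inner (m-p) d + \<beta> * inner (m-q) d + inner c d = 0"
    by (simp add: inner_add_left)
  have "\<Phi> w = \<alpha>/2 * norm ((m - p) + d)^2 + \<beta>/2 * norm ((m-q) + d)^2 + inner c ((m - q) + d)"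
    by (simp add: \<Phi>_def wm algebra_simps)
  also have "\<dots> = \<Phi> m + (\<alpha>+\<beta>)/2 * norm d^2"
    unfolding sqexp \<Phi>_def using lin by (simp add: inner_add_right algebra_simps add_divide_distrib)
  finally show ?thesis by (simp add: d_def)
qed

lemma comb_quad:
  fixes z y0 y1 v zt :: "'a::real_inner" and a A A' c mu :: real
  assumes "A' = A + a" "A' \<noteq> 0" "zt = (a / A') *\<^sub>R z + (A / A') *\<^sub>R y0"
  defines "q \<equiv> (\<lambda>w. c + inner v (w - y1) + mu/2 * norm (w - y1)^2)"
  shows "a * q z + A * q y0 = A' * q zt + mu * a * A / (2 * A') * norm (z - y0)^2"
proof -
  define p where "p = z - y1"
  define r where "r = y0 - y1"
  define s where "s = a / A'"
  define t where "t = A / A'"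
  have st1: "s + t = 1" using assms(1,2) unfolding s_def t_def by (simp add: add_divide_distrib[symmetric] add.commute)
  have st: "s + t = 1" "a = s * A'" "A = t * A'" using st1 assms(2) by (auto simp: s_def t_def)
  have zt: "zt - y1 = s *\<^sub>R p + t *\<^sub>R r"
  proof -
    have "zt - y1 = s *\<^sub>R z + t *\<^sub>R y0 - (s + t) *\<^sub>R y1" using st(1) by (simp add: assms(3) s_def t_def)
    thus ?thesis by (simp add: p_def r_def algebra_simps)
  qed
  have zy: "z - y0 = p - r" by (simp add: p_def r_def)
  have tt: "t = 1 - s" using st(1) by simp
  have c1: "mu * a * A / (2 * A') = mu * s * t * A' / 2" using assms(2) st by (simp add: field_simps)
  have e1: "norm (s *\<^sub>R p + t *\<^sub>R r)^2 = s^2 * norm p^2 + 2 * s * t * inner p r + t^2 * norm r^2"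
    unfolding sqexp by (simp add: power_mult_distrib mult.assoc)
  have e2: "norm (p - r)^2 = norm p^2 - 2 * inner p r + norm r^2"
    using sqexp[of p "-r"] by simp
  have e3: "inner v (s *\<^sub>R p + t *\<^sub>R r) = s * inner v p + t * inner v r" by (simp add: inner_add_right)
  have "a * q z + A * q y0 = a * (c + inner v p + mu/2 * norm p^2) + A * (c + inner v r + mu/2*norm r^2)"
    by (simp add: q_def p_def r_def)
  also have "\<dots> = A' * (c + inner v (s *\<^sub>R p + t *\<^sub>R r) + mu/2 * norm (s *\<^sub>R p + t *\<^sub>R r)^2)
     + mu * a * A / (2 * A') * norm (p - r)^2"
    unfolding c1 e1 e2 e3 unfolding st(2,3) tt by (simp add: power2_eq_square field_simps)
  finally show ?thesis by (simp add: q_def zt zy)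
qed

lemma hpe:
  fixes v w y xt :: "'a::real_inner" and lam mu eps sig H :: real
  assumes "lam > 0" "mu \<ge> 0"
    "norm (lam *\<^sub>R v + y - xt)^2 / (1 + lam * mu) + 2 * lam * eps \<le> sig^2 * norm (y - xt)^2"
  shows "H + (1 - sig^2) / (2 * lam) * norm (y - xt)^2
     \<le> H + inner v (w - y) - eps + mu/2 * norm (w - y)^2 + 1/(2*lam) * norm (w - xt)^2"
proof -
  define u where "u = w - y"
  define s where "s = y - xt"
  define r where "r = lam *\<^sub>R v + s"
  define L where "L = 1 + lam * mu"
  have L0: "L > 0" using assms(1,2) by (simp add: L_def add_pos_nonneg)
  have wx: "w - xt = u + s" by (simp add: u_def s_def)
  have id: "lam * (inner v u + mu/2 * norm u^2) + 1/2 * norm (u + s)^2 = L/2 * norm u^2 + inner r u + 1/2 * norm s^2"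
    unfolding sqexp by (simp add: L_def r_def inner_add_left inner_commute algebra_simps)
  have "0 \<le> norm (L *\<^sub>R u + r)^2" by simp
  hence "0 \<le> L^2 * norm u^2 + 2 * L * inner u r + norm r^2"
    unfolding sqexp by (simp add: power_mult_distrib abs_of_pos[OF L0])
  hence q: "-(norm r^2) / (2 * L) \<le> L/2 * norm u^2 + inner r u"
    using L0 by (simp add: field_simps power2_eq_square inner_commute)
  have c: "norm r^2 / L + 2 * lam * eps \<le> sig^2 * norm s^2"
    using assms(3) by (simp add: r_def s_def L_def algebra_simps)
  have "lam * ((1 - sig^2) / (2 * lam) * norm s^2) \<le> lam * (inner v u - eps + mu/2 * norm u^2 + 1/(2*lam) * norm (u+s)^2)"
  proof -
    have "lam * ((1 - sig^2) / (2 * lam) * norm s^2) = 1/2 * norm s^2 - sig^2/2 * norm s^2"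
      using assms(1) by (simp add: field_simps)
    also have "\<dots> \<le> 1/2 * norm s^2 - norm r^2 / (2*L) - lam * eps"
      using c L0 by (simp add: field_simps)
    also have "\<dots> \<le> lam * (inner v u + mu/2 * norm u^2) + 1/2 * norm (u + s)^2 - lam * eps"
      using q id by linarith
    also have "\<dots> = lam * (inner v u - eps + mu/2 * norm u^2 + 1/(2*lam) * norm (u+s)^2)"
      using assms(1) by (simp add: field_simps)
    finally show ?thesis .
  qed
  hence "(1 - sig^2) / (2 * lam) * norm s^2 \<le> inner v u - eps + mu/2 * norm u^2 + 1/(2*lam) * norm (u+s)^2"
    using assms(1) mult_le_cancel_left_pos by blast
  thus ?thesis by (simp add: u_def s_def wx[symmetric] )
qed

lemma delta_id:
  fixes z xk y0 zt zk xt :: "'a::real_inner" and a A A' lam mu :: real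
  assumes a0: "a > 0" and A0: "A \<ge> 0" and AA: "A' = A + a" and l0: "lam > 0" and m0: "mu > 0"
    and quad: "a^2 = (1 + 2*mu*A)*lam*a + (1 + mu*A)*A*lam"
    and zt: "zt = (a/A') *\<^sub>R z + (A/A') *\<^sub>R y0"
    and zk: "zk = (a/A') *\<^sub>R xk + (A/A') *\<^sub>R y0"
    and xt: "xt = ((a - mu*A*lam)/(A+a)) *\<^sub>R xk + ((A + mu*A*lam)/(A+a)) *\<^sub>R y0"
  shows "(1+mu*A)*A'/(2*a^2)*norm(zt-zk)^2 + mu*A/(2*a)*norm(zt-y0)^2
       = 1/(2*lam)*(norm(zt-xt)^2 + mu*(1+mu*A)*lam^2*A/(a*A')*norm(xk-y0)^2)"
proof -
  define d where "d = z - xk"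
  define e where "e = xk - y0"
  have A'0: "A' > 0" using a0 A0 AA by simp
  have v1: "zt - zk = (a/A') *\<^sub>R d" by (simp add: zt zk d_def algebra_simps)
  have v2: "zt - y0 = (a/A') *\<^sub>R (d + e)"
  proof -
    have "zt - y0 = (a/A') *\<^sub>R z + (A/A' - 1) *\<^sub>R y0" by (simp add: zt algebra_simps)
    also have "A/A' - 1 = - (a/A')" using A'0 AA by (simp add: field_simps)
    finally show ?thesis by (simp add: d_def e_def algebra_simps)
  qed
  have v3: "zt - xt = (1/A') *\<^sub>R (a *\<^sub>R d + (mu*A*lam) *\<^sub>R e)"
  proof -
    have h1: "A' *\<^sub>R zt = a *\<^sub>R z + A *\<^sub>R y0" using A'0 by (simp add: zt scaleR_add_right)
    have h2: "A' *\<^sub>R xt = (a - mu*A*lam) *\<^sub>R xk + (A + mu*A*lam) *\<^sub>R y0"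
      using A'0 AA by (simp add: xt scaleR_add_right)
    have "A' *\<^sub>R (zt - xt) = A' *\<^sub>R zt - A' *\<^sub>R xt" by (simp add: scaleR_diff_right)
    also have "\<dots> = a *\<^sub>R d + (mu*A*lam) *\<^sub>R e" unfolding h1 h2 by (simp add: d_def e_def algebra_simps)
    finally have "A' *\<^sub>R (zt - xt) = a *\<^sub>R d + (mu*A*lam) *\<^sub>R e" .
    hence "(1/A') *\<^sub>R (A' *\<^sub>R (zt - xt)) = (1/A') *\<^sub>R (a *\<^sub>R d + (mu*A*lam) *\<^sub>R e)" by simp
    thus ?thesis using A'0 by simp
  qed
  define nd where "nd = norm d^2"
  define ne where "ne = norm e^2"
  define de where "de = inner d e"
  have n1: "norm (zt-zk)^2 = (a/A')^2 * nd" by (simp add: v1 nd_def power_mult_distrib power_divide)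
  have n2: "norm (zt-y0)^2 = (a/A')^2 * (nd + 2*de + ne)" by (simp add: v2 nd_def ne_def de_def power_mult_distrib power_divide sqexp)
  have n3: "norm (zt-xt)^2 = (1/A')^2 * (a^2 * nd + 2*a*mu*A*lam*de + (mu*A*lam)^2*ne)"
    by (simp add: v3 nd_def ne_def de_def power_mult_distrib power_divide sqexp)
  have n4: "norm (xk - y0)^2 = ne" by (simp add: ne_def e_def)
  have lam_eq: "lam = a^2 / ((1 + 2*mu*A)*a + (1 + mu*A)*A)"
  proof -
    have pos: "(1 + 2*mu*A)*a + (1 + mu*A)*A > 0" using a0 A0 m0 by (simp add: add_pos_nonneg)
    have "a^2 = lam * ((1 + 2*mu*A)*a + (1 + mu*A)*A)" using quad by (simp add: algebra_simps)
    thus ?thesis using pos by (simp add: field_simps)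
  qed
  have ne0: "a \<noteq> 0" "A' \<noteq> 0" "lam \<noteq> 0" using a0 A'0 l0 by auto
  define W where "W = mu*A*a + (1+mu*A)*A'"
  have key: "W = a^2 / lam" using quad AA ne0 by (simp add: W_def field_simps power2_eq_square)
  have c1: "(1+mu*A)/(2*A') + mu*A*a/(2*A'^2) = a^2/(2*lam*A'^2)"
  proof -
    have "(1+mu*A)/(2*A') + mu*A*a/(2*A'^2) = W/(2*A'^2)" using ne0 by (simp add: W_def field_simps power2_eq_square)
    thus ?thesis using key ne0 by (simp add: field_simps)
  qed
  have c3: "mu^2*A^2*lam/(2*A'^2) + mu*(1+mu*A)*lam*A/(2*a*A') = mu*A*a/(2*A'^2)"
  proof -
    have "mu^2*A^2*lam/(2*A'^2) + mu*(1+mu*A)*lam*A/(2*a*A') = mu*A*lam*W/(2*a*A'^2)"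
      using ne0 by (simp add: W_def field_simps power2_eq_square)
    thus ?thesis using key ne0 by (simp add: field_simps power2_eq_square)
  qed
  have L: "(1+mu*A)*A'/(2*a^2)*((a/A')^2 * nd) + mu*A/(2*a)*((a/A')^2 * (nd + 2*de + ne))
     = ((1+mu*A)/(2*A') + mu*A*a/(2*A'^2))*nd + (mu*A*a/A'^2)*de + (mu*A*a/(2*A'^2))*ne"
    using ne0 by (simp add: field_simps power2_eq_square)
  have R: "1/(2*lam)*((1/A')^2 * (a^2 * nd + 2*a*mu*A*lam*de + (mu*A*lam)^2*ne) + mu*(1+mu*A)*lam^2*A/(a*A')*ne)
     = (a^2/(2*lam*A'^2))*nd + (mu*A*a/A'^2)*de + (mu^2*A^2*lam/(2*A'^2) + mu*(1+mu*A)*lam*A/(2*a*A'))*ne"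
    using ne0 by (simp add: field_simps power2_eq_square)
  show ?thesis unfolding n1 n2 n3 n4 L R c1 c3 ..
qed

lemma sc_subgrad:
  fixes g :: "'a::real_inner \<Rightarrow> ereal"
  assumes sc: "strongly_convex_fun mu g" and m0: "mu \<ge> 0" and sg: "w' \<in> subdiff g y"
    and gy: "g y = ereal gy" and ninf: "\<And>p. g p \<noteq> -\<infinity>"
  shows "ereal (gy + inner w' (w - y) + mu/2 * norm (w - y)^2) \<le> g w"
proof (cases "g w = \<infinity>")
  case True thus ?thesis by simp
next
  case False
  then obtain gw where gw: "g w = ereal gw" using ninf[of w] by (cases "g w") auto
  have "gy + inner w' (w - y) + mu/2 * norm (w - y)^2 - t * (mu/2 * norm (w-y)^2) \<le> gw"
    if t: "0 < t" "t \<le> 1" for t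
  proof -
    define p where "p = t *\<^sub>R w + (1 - t) *\<^sub>R y"
    have py: "p - y = t *\<^sub>R (w - y)" by (simp add: p_def algebra_simps)
    have up: "g p \<le> ereal (t * gw + (1 - t) * gy - mu / 2 * t * (1 - t) * norm (w - y)^2)"
    proof -
      have "g p \<le> ereal t * g w + ereal (1 - t) * g y - ereal (mu / 2 * t * (1 - t) * norm (w - y)^2)"
        using sc t unfolding strongly_convex_fun_def p_def by auto
      thus ?thesis by (simp add: gw gy)
    qed
    have lo: "ereal (gy + inner w' (p - y)) \<le> g p"
      using sg unfolding subdiff_def eps_subdiff_def by (auto simp: gy elim!: allE[of _ p])
    from order_trans[OF lo up] have "gy + t * inner w' (w - y) \<le> t * gw + (1 - t) * gy - mu / 2 * t * (1 - t) * norm (w - y)^2"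
      by (simp add: py)
    hence "t * (gy + inner w' (w - y) + mu/2 * norm (w - y)^2 - t * (mu/2 * norm (w-y)^2)) \<le> t * gw"
      by (simp add: algebra_simps add_divide_distrib diff_divide_distrib)
    thus ?thesis using t mult_le_cancel_left_pos by blast
  qed
  hence "gy + inner w' (w - y) + mu/2 * norm (w - y)^2 \<le> gw"
    by (rule lim_le_aux) (use m0 in auto)
  thus ?thesis by (simp add: gw)
qed

lemma subdiff_finite:
  fixes f :: "'a::real_inner \<Rightarrow> ereal"
  assumes "proper_fun f" "u \<in> eps_subdiff f e y"
  shows "\<exists>r. f y = ereal r"
proof -
  obtain w0 where w0: "f w0 \<noteq> \<infinity>" using assms(1) unfolding proper_fun_def by auto
  have "f y \<noteq> \<infinity>"
  proof
    assume "f y = \<infinity>"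
    hence "f y + ereal (inner u (w0 - y)) - ereal e = \<infinity>" by simp
    moreover have "f w0 \<ge> f y + ereal (inner u (w0 - y)) - ereal e" using assms(2) unfolding eps_subdiff_def by auto
    ultimately show False using w0 by simp
  qed
  moreover have "f y \<noteq> -\<infinity>" using assms(1) unfolding proper_fun_def by auto
  ultimately show ?thesis by (cases "f y") auto
qed

lemma delta_simp:
  fixes z xk y0 zt zk :: "'a::real_inner" and a A A' mu :: real
  assumes a0: "a > 0" and A0: "A \<ge> 0" and AA: "A' = A + a"
    and zt: "zt = (a/A') *\<^sub>R z + (A/A') *\<^sub>R y0"
    and zk: "zk = (a/A') *\<^sub>R xk + (A/A') *\<^sub>R y0"
  shows "A' * ((1+mu*A)*A'/(2*a^2)*norm(zt-zk)^2 + mu*A/(2*a)*norm(zt-y0)^2)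
     = (1+mu*A)/2*norm(z-xk)^2 + mu*a*A/(2*A')*norm(z-y0)^2"
proof -
  have A'0: "A' > 0" using a0 A0 AA by simp
  have v1: "zt - zk = (a/A') *\<^sub>R (z - xk)" by (simp add: zt zk algebra_simps)
  have v2: "zt - y0 = (a/A') *\<^sub>R (z - y0)"
  proof -
    have "zt - y0 = (a/A') *\<^sub>R z + (A/A' - 1) *\<^sub>R y0" by (simp add: zt algebra_simps)
    also have "A/A' - 1 = - (a/A')" using A'0 AA by (simp add: field_simps)
    finally show ?thesis by (simp add: algebra_simps)
  qed
  have n1: "norm(zt-zk)^2 = (a/A')^2 * norm(z-xk)^2" by (simp only: v1 norm_scaleR power_mult_distrib power2_abs)
  have n2: "norm(zt-y0)^2 = (a/A')^2 * norm(z-y0)^2" by (simp only: v2 norm_scaleR power_mult_distrib power2_abs)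
  show ?thesis unfolding n1 n2 using a0 A'0
    by (simp add: power_divide field_simps power2_eq_square)
qed

lemma a_props:
  fixes a B D :: real
  assumes "a = (B + sqrt (B^2 + D)) / 2" "B > 0" "D \<ge> 0"
  shows "a > 0" "a^2 = B * a + D / 4"
proof -
  have sq: "sqrt (B^2 + D) \<ge> 0" using assms(3) by (intro real_sqrt_ge_zero add_nonneg_nonneg) auto
  have "2 * a = B + sqrt (B^2 + D)" using assms(1) by simp
  thus "a > 0" using sq assms(2) by linarith
  have "(sqrt (B^2 + D))^2 = B^2 + D" using assms(3) by (intro real_sqrt_pow2 add_nonneg_nonneg) auto
  moreover have "sqrt (B^2 + D) = 2 * a - B" using assms(1) by simp
  ultimately have "(2*a - B)^2 = B^2 + D" by simp
  thus "a^2 = B * a + D / 4" by (simp add: power2_eq_square algebra_simps)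
qed


theorem lemma2p3:
  fixes f g :: "'a::euclidean_space \<Rightarrow> ereal"
    and \<mu> \<sigma> :: real
    and x y v xt :: "nat \<Rightarrow> 'a"
    and eps lam a A :: "nat \<Rightarrow> real"
  assumes "proper_fun f" "closed_fun f" "convex_fun f"
    and "proper_fun g" "closed_fun g" "convex_fun g"
    and "\<exists>z. f z + g z \<noteq> \<infinity>"
    and "\<mu> > 0" and "strongly_convex_fun \<mu> g"
    and "algorithm1 f g \<mu> \<sigma> x y v eps lam a A xt"
  shows "\<forall>k (z::'a).
    let zt = (a (Suc k) / A (Suc k)) *\<^sub>R z + (A k / A (Suc k)) *\<^sub>R y k;
        zk = (a (Suc k) / A (Suc k)) *\<^sub>R x k + (A k / A (Suc k)) *\<^sub>R y k;
        \<Delta> = (1 + \<mu> * A k) * A (Suc k) / (2 * a (Suc k)^2) * norm (zt - zk)^2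
            + \<mu> * A k / (2 * a (Suc k)) * norm (zt - y k)^2;
        \<gamma> = gam f g \<mu> y v eps (Suc k);
        h = (\<lambda>w. f w + g w)
    in
      ereal (a (Suc k)) * \<gamma> z + ereal (A k) * \<gamma> (y k)
        = ereal (A (Suc k)) * \<gamma> zt
          + ereal (\<mu> * a (Suc k) * A k / (2 * A (Suc k)) * norm (z - y k)^2)
    \<and> ereal (A k) * h (y k) + ereal (A (Suc k)) * Gam f g \<mu> y v eps a A (Suc k) z
          + ereal (1/2 * norm (z - x 0)^2)
        \<ge> bet f g \<mu> x y v eps a A k + ereal (A (Suc k)) * (\<gamma> zt + ereal \<Delta>)
    \<and> \<Delta> = 1 / (2 * lam (Suc k)) * (norm (zt - xt k)^2
            + \<mu> * (1 + \<mu> * A k) * lam (Suc k)^2 * A k / (a (Suc k) * A (Suc k))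
              * norm (x k - y k)^2)
    \<and> ereal (A k) * h (y k) + ereal (A (Suc k)) * Gam f g \<mu> y v eps a A (Suc k) z
          + ereal (1/2 * norm (z - x 0)^2)
        \<ge> bet f g \<mu> x y v eps a A k + ereal (A (Suc k)) * h (y (Suc k))
          + ereal ((1 - \<sigma>^2) / 2 * A (Suc k) / lam (Suc k) * norm (y (Suc k) - xt k)^2)
          + ereal (\<mu> * (1 + \<mu> * A k) * lam (Suc k) * A k / (2 * a (Suc k)) * norm (x k - y k)^2)"
proof -
  note alg = assms(10)[unfolded algorithm1_def]
  have sig: "0 \<le> \<sigma>" "\<sigma> \<le> 1" and A00: "A 0 = 0" using alg by auto
  have lam0: "\<And>k. lam (Suc k) > 0" using alg by blast
  have aeq: "\<And>k. a (Suc k) = ((1 + 2 * \<mu> * A k) * lam (Suc k)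
                    + sqrt (((1 + 2 * \<mu> * A k) * lam (Suc k))^2
                            + 4 * (1 + \<mu> * A k) * A k * lam (Suc k))) / 2" using alg by blast
  have xteq: "\<And>k. xt k = ((a (Suc k) - \<mu> * A k * lam (Suc k)) / (A k + a (Suc k))) *\<^sub>R x k
              + ((A k + \<mu> * A k * lam (Suc k)) / (A k + a (Suc k))) *\<^sub>R y k" using alg by blast
  have sub: "\<And>k. \<exists>u w. u \<in> eps_subdiff f (eps (Suc k)) (y (Suc k)) \<and> w \<in> subdiff g (y (Suc k))
              \<and> v (Suc k) = u + w" using alg by blast
  have hpec: "\<And>k. norm (lam (Suc k) *\<^sub>R v (Suc k) + y (Suc k) - xt k)^2 / (1 + lam (Suc k) * \<mu>)
         + 2 * lam (Suc k) * eps (Suc k) \<le> \<sigma>^2 * norm (y (Suc k) - xt k)^2" using alg by blast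
  have AS: "\<And>k. A (Suc k) = A k + a (Suc k)" using alg by blast
  have xS: "\<And>k. x (Suc k) = ((1 + \<mu> * A k) / (1 + \<mu> * A (Suc k))) *\<^sub>R x k
                   + (\<mu> * a (Suc k) / (1 + \<mu> * A (Suc k))) *\<^sub>R y (Suc k)
                   - (a (Suc k) / (1 + \<mu> * A (Suc k))) *\<^sub>R v (Suc k)" using alg by blast
  have m0: "\<mu> > 0" by fact
  have ap: "A k \<ge> 0 \<Longrightarrow> a (Suc k) > 0 \<and> a (Suc k)^2 = (1 + 2 * \<mu> * A k) * lam (Suc k) * a (Suc k) + (1 + \<mu> * A k) * A k * lam (Suc k)" for k
  proof -
    assume A0: "A k \<ge> 0"
    have B: "(1 + 2 * \<mu> * A k) * lam (Suc k) > 0" using A0 m0 lam0[of k] by (simp add: add_pos_nonneg)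
    have D: "4 * (1 + \<mu> * A k) * A k * lam (Suc k) \<ge> 0" using A0 m0 lam0[of k] by (simp add: add_pos_nonneg)
    from a_props[OF aeq[of k] B D] show ?thesis by (simp add: algebra_simps)
  qed
  have Anon: "A k \<ge> 0" for k
  proof (induction k)
    case 0 thus ?case by (simp add: A00)
  next
    case (Suc k) thus ?case using ap[OF Suc] AS[of k] by simp
  qed
  have apos: "a (Suc k) > 0" for k using ap[OF Anon] by blast
  have aquad: "a (Suc k)^2 = (1 + 2 * \<mu> * A k) * lam (Suc k) * a (Suc k) + (1 + \<mu> * A k) * A k * lam (Suc k)" for k
    using ap[OF Anon] by blast
  have ASpos: "A (Suc k) > 0" for k using AS[of k] apos[of k] Anon[of k] by simp
  define FR where "FR j = real_of_ereal (f (y j))" for j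
  define GR where "GR j = real_of_ereal (g (y j))" for j
  define HR where "HR j = FR j + GR j" for j
  have finfg: "f (y (Suc k)) = ereal (FR (Suc k)) \<and> g (y (Suc k)) = ereal (GR (Suc k))" for k
  proof -
    obtain u w where uw: "u \<in> eps_subdiff f (eps (Suc k)) (y (Suc k))" "w \<in> subdiff g (y (Suc k))" using sub[of k] by blast
    obtain r1 where r1: "f (y (Suc k)) = ereal r1" using subdiff_finite[OF assms(1) uw(1)] by blast
    obtain r2 where r2: "g (y (Suc k)) = ereal r2" using subdiff_finite[OF assms(4) uw(2)[unfolded subdiff_def]] by blast
    show ?thesis using r1 r2 by (simp add: FR_def GR_def)
  qed
  have hy: "f (y (Suc k)) + g (y (Suc k)) = ereal (HR (Suc k))" for k using finfg[of k] by (simp add: HR_def)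
  define gr where "gr j w = (HR j - eps j) + inner (v j) (w - y j) + \<mu>/2 * norm (w - y j)^2" for j w
  have gam_eq: "gam f g \<mu> y v eps (Suc k) w = ereal (gr (Suc k) w)" for k w
    unfolding gam_def gr_def hy by simp
  have gam_le: "ereal (gr (Suc k) w) \<le> f w + g w" for k w
  proof -
    obtain u w2 where uw: "u \<in> eps_subdiff f (eps (Suc k)) (y (Suc k))" "w2 \<in> subdiff g (y (Suc k))"
      "v (Suc k) = u + w2" using sub[of k] by blast
    have fninf: "f p \<noteq> -\<infinity>" for p using assms(1) unfolding proper_fun_def by auto
    have gninf: "g p \<noteq> -\<infinity>" for p using assms(4) unfolding proper_fun_def by auto
    have fl: "f (y (Suc k)) + ereal (inner u (w - y (Suc k))) - ereal (eps (Suc k)) \<le> f w"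
      using uw(1) unfolding eps_subdiff_def by auto
    hence fl': "ereal (FR (Suc k) + inner u (w - y (Suc k)) - eps (Suc k)) \<le> f w" using finfg[of k] by simp
    have gl: "ereal (GR (Suc k) + inner w2 (w - y (Suc k)) + \<mu>/2 * norm (w - y (Suc k))^2) \<le> g w"
      by (rule sc_subgrad[OF assms(9) less_imp_le[OF m0] uw(2)]) (use finfg[of k] gninf in auto)
    show ?thesis
    proof (cases "f w = \<infinity> \<or> g w = \<infinity>")
      case True thus ?thesis using fninf[of w] gninf[of w] by auto
    next
      case False
      then obtain fw gw where fw: "f w = ereal fw" and gw: "g w = ereal gw" using fninf[of w] gninf[of w]
        by (cases "f w"; cases "g w") auto
      from fl' gl have "FR (Suc k) + inner u (w - y (Suc k)) - eps (Suc k) \<le> fw"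
        "GR (Suc k) + inner w2 (w - y (Suc k)) + \<mu>/2 * norm (w - y (Suc k))^2 \<le> gw" by (auto simp: fw gw)
      hence "gr (Suc k) w \<le> fw + gw" by (simp add: gr_def HR_def uw(3) inner_add_left)
      thus ?thesis by (simp add: fw gw)
    qed
  qed
  define S where "S k w = (\<Sum>j\<in>{1..k}. a j * gr j w)" for k w
  define Qr where "Qr k w = S k w + 1/2 * norm (w - x 0)^2" for k w
  have Gam_Suc: "ereal (A (Suc k)) * Gam f g \<mu> y v eps a A (Suc k) w = ereal (S (Suc k) w)" for k w
  proof -
    have "Gam f g \<mu> y v eps a A (Suc k) w = (\<Sum>j\<in>{1..Suc k}. ereal (a j / A (Suc k)) * gam f g \<mu> y v eps j w)"
      by (simp add: Gam_def)
    also have "\<dots> = (\<Sum>j\<in>{1..Suc k}. ereal (a j / A (Suc k) * gr j w))"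
    proof (rule sum.cong)
      fix j assume "j \<in> {1..Suc k}"
      then obtain i where "j = Suc i" by (cases j) auto
      thus "ereal (a j / A (Suc k)) * gam f g \<mu> y v eps j w = ereal (a j / A (Suc k) * gr j w)"
        by (simp add: gam_eq)
    qed simp
    also have "\<dots> = ereal (\<Sum>j\<in>{1..Suc k}. a j / A (Suc k) * gr j w)" by simp
    finally have G: "Gam f g \<mu> y v eps a A (Suc k) w = ereal (\<Sum>j\<in>{1..Suc k}. a j / A (Suc k) * gr j w)" .
    have "A (Suc k) * (\<Sum>j\<in>{1..Suc k}. a j / A (Suc k) * gr j w) = (\<Sum>j\<in>{1..Suc k}. A (Suc k) * (a j / A (Suc k) * gr j w))"
      by (rule sum_distrib_left)
    also have "\<dots> = S (Suc k) w" unfolding S_def using ASpos[of k] by (intro sum.cong) auto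
    finally show ?thesis by (simp add: G)
  qed
  have Qeq: "ereal (A k) * Gam f g \<mu> y v eps a A k w + ereal (1/2 * norm (w - x 0)^2) = ereal (Qr k w)" for k w
  proof (cases k)
    case 0 thus ?thesis by (simp add: A00 Gam_def Qr_def S_def)
  next
    case (Suc m) thus ?thesis by (simp add: Gam_Suc Qr_def)
  qed
  have Qstep: "Qr (Suc k) w = Qr k w + a (Suc k) * gr (Suc k) w" for k w
    by (simp add: Qr_def S_def)
  have Qform: "Qr k w = Qr k (x k) + (1 + \<mu> * A k)/2 * norm (w - x k)^2" for k w
  proof (induction k arbitrary: w)
    case 0 thus ?case by (simp add: Qr_def S_def A00)
  next
    case (Suc k)
    define \<alpha> where "\<alpha> = 1 + \<mu> * A k"
    define \<beta> where "\<beta> = a (Suc k) * \<mu>"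
    define c where "c = a (Suc k) *\<^sub>R v (Suc k)"
    define \<Phi> where "\<Phi> = (\<lambda>w. \<alpha>/2 * norm (w - x k)^2 + \<beta>/2 * norm (w - y (Suc k))^2 + inner c (w - y (Suc k)))"
    define K where "K = Qr k (x k) + a (Suc k) * (HR (Suc k) - eps (Suc k))"
    have ab: "\<alpha> + \<beta> = 1 + \<mu> * A (Suc k)" by (simp add: \<alpha>_def \<beta>_def AS algebra_simps)
    have "0 \<le> \<mu> * A (Suc k)" using Anon[of "Suc k"] m0 by simp
    hence ab0: "\<alpha> + \<beta> \<noteq> 0" unfolding ab by linarith
    have Qw: "Qr (Suc k) w = K + \<Phi> w" for w
      unfolding Qstep Suc.IH[of w] by (simp add: K_def \<Phi>_def gr_def \<alpha>_def \<beta>_def c_def algebra_simps)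
    have m: "x (Suc k) = (\<alpha>/(\<alpha>+\<beta>)) *\<^sub>R x k + (\<beta>/(\<alpha>+\<beta>)) *\<^sub>R y (Suc k) - (1/(\<alpha>+\<beta>)) *\<^sub>R c"
      unfolding xS ab by (simp add: \<alpha>_def \<beta>_def c_def mult.commute)
    have "\<Phi> w = \<Phi> (x (Suc k)) + (\<alpha>+\<beta>)/2 * norm (w - x (Suc k))^2"
      unfolding m \<Phi>_def by (rule quad_min[OF ab0])
    thus ?case unfolding Qw ab by simp
  qed
  have bet_eq: "bet f g \<mu> x y v eps a A k = ereal (Qr k (x k))" for k
  proof -
    have "bet f g \<mu> x y v eps a A k = (INF z. ereal (Qr k z))" unfolding bet_def Qeq ..
    also have "\<dots> = ereal (Qr k (x k))"
    proof (rule antisym)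
      show "(INF z. ereal (Qr k z)) \<le> ereal (Qr k (x k))" by (rule INF_lower) simp
      show "ereal (Qr k (x k)) \<le> (INF z. ereal (Qr k z))"
      proof (rule INF_greatest)
        fix z
        have "0 \<le> (1 + \<mu> * A k)/2 * norm (z - x k)^2" using Anon[of k] m0 by (simp add: add_nonneg_nonneg)
        thus "ereal (Qr k (x k)) \<le> ereal (Qr k z)" using Qform[of k z] by simp
      qed
    qed
    finally show ?thesis .
  qed
  have hk: "\<exists>Hk. ereal (A k) * (f (y k) + g (y k)) = ereal (A k * Hk) \<and> A k * gr (Suc k) (y k) \<le> A k * Hk" for k
  proof (cases k)
    case 0 thus ?thesis by (intro exI[of _ 0]) (simp add: A00 zero_ereal_def[symmetric])
  next
    case (Suc m)
    have "ereal (gr (Suc k) (y k)) \<le> ereal (HR k)" using gam_le[of k "y k"] hy[of m] Suc by simp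
    hence "A k * gr (Suc k) (y k) \<le> A k * HR k" using Anon[of k] by (simp add: mult_left_mono)
    thus ?thesis using Suc hy[of m] by (intro exI[of _ "HR k"]) simp
  qed
  show ?thesis
  proof (intro allI)
    fix k and z :: 'a
    define a' where "a' = a (Suc k)"
    define Ak where "Ak = A k"
    define A' where "A' = A (Suc k)"
    define zt where "zt = (a (Suc k) / A (Suc k)) *\<^sub>R z + (A k / A (Suc k)) *\<^sub>R y k"
    define zk where "zk = (a (Suc k) / A (Suc k)) *\<^sub>R x k + (A k / A (Suc k)) *\<^sub>R y k"
    define \<Delta> where "\<Delta> = (1 + \<mu> * A k) * A (Suc k) / (2 * a (Suc k)^2) * norm (zt - zk)^2
            + \<mu> * A k / (2 * a (Suc k)) * norm (zt - y k)^2"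
    obtain Hk where Hk: "ereal (A k) * (f (y k) + g (y k)) = ereal (A k * Hk)" "A k * gr (Suc k) (y k) \<le> A k * Hk"
      using hk[of k] by blast
    have pa: "a (Suc k) * gr (Suc k) z + A k * gr (Suc k) (y k) = A (Suc k) * gr (Suc k) zt + \<mu> * a (Suc k) * A k / (2 * A (Suc k)) * norm (z - y k)^2"
      using comb_quad[OF AS[of k] _ zt_def, of "HR (Suc k) - eps (Suc k)" "v (Suc k)" "y (Suc k)" \<mu>] ASpos[of k]
      by (simp add: gr_def)
    have pc: "\<Delta> = 1 / (2 * lam (Suc k)) * (norm (zt - xt k)^2
            + \<mu> * (1 + \<mu> * A k) * lam (Suc k)^2 * A k / (a (Suc k) * A (Suc k)) * norm (x k - y k)^2)"
      unfolding \<Delta>_def by (rule delta_id[OF apos Anon AS lam0 m0 _ zt_def zk_def xteq]) (simp add: aquad)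
    have dA: "A (Suc k) * \<Delta> = (1 + \<mu> * A k)/2 * norm (z - x k)^2 + \<mu> * a (Suc k) * A k / (2 * A (Suc k)) * norm (z - y k)^2"
      unfolding \<Delta>_def by (rule delta_simp[OF apos Anon AS zt_def zk_def])
    have Q1: "S (Suc k) z + 1/2 * norm (z - x 0)^2 = Qr k (x k) + (1 + \<mu> * A k)/2 * norm (z - x k)^2 + a (Suc k) * gr (Suc k) z"
      using Qstep[of k z] Qform[of k z] by (simp add: Qr_def)
    have pb: "Qr k (x k) + A (Suc k) * (gr (Suc k) zt + \<Delta>) \<le> A k * Hk + S (Suc k) z + 1/2 * norm (z - x 0)^2"
      using pa dA Q1 Hk(2) by (simp add: algebra_simps)
    have hp: "HR (Suc k) + (1 - \<sigma>^2) / (2 * lam (Suc k)) * norm (y (Suc k) - xt k)^2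
       \<le> HR (Suc k) + inner (v (Suc k)) (zt - y (Suc k)) - eps (Suc k) + \<mu>/2 * norm (zt - y (Suc k))^2 + 1/(2*lam (Suc k)) * norm (zt - xt k)^2"
      by (rule hpe[OF lam0 less_imp_le[OF m0] hpec])
    have hp2: "A (Suc k) * HR (Suc k) + (1 - \<sigma>^2) / 2 * A (Suc k) / lam (Suc k) * norm (y (Suc k) - xt k)^2
       + \<mu> * (1 + \<mu> * A k) * lam (Suc k) * A k / (2 * a (Suc k)) * norm (x k - y k)^2
       \<le> A (Suc k) * (gr (Suc k) zt + \<Delta>)"
    proof -
      have e1: "A (Suc k) * \<Delta> = A (Suc k) / (2 * lam (Suc k)) * norm (zt - xt k)^2
          + \<mu> * (1 + \<mu> * A k) * lam (Suc k) * A k / (2 * a (Suc k)) * norm (x k - y k)^2"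
        unfolding pc using lam0[of k] apos[of k] ASpos[of k] by (simp add: field_simps power2_eq_square)
      have e2: "(1 - \<sigma>^2) / 2 * A (Suc k) / lam (Suc k) * norm (y (Suc k) - xt k)^2
          = A (Suc k) * ((1 - \<sigma>^2) / (2 * lam (Suc k)) * norm (y (Suc k) - xt k)^2)" by (simp add: field_simps)
      have e3: "A (Suc k) / (2 * lam (Suc k)) * norm (zt - xt k)^2 = A (Suc k) * (1/(2*lam (Suc k)) * norm (zt - xt k)^2)" by simp
      have "A (Suc k) * (HR (Suc k) + (1 - \<sigma>^2) / (2 * lam (Suc k)) * norm (y (Suc k) - xt k)^2)
          \<le> A (Suc k) * (gr (Suc k) zt + 1/(2*lam (Suc k)) * norm (zt - xt k)^2)"
        using hp ASpos[of k] by (intro mult_left_mono) (auto simp: gr_def)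
      thus ?thesis unfolding e1 e2 distrib_left e3 by (simp add: algebra_simps)
    qed
    show "let zt = (a (Suc k) / A (Suc k)) *\<^sub>R z + (A k / A (Suc k)) *\<^sub>R y k;
        zk = (a (Suc k) / A (Suc k)) *\<^sub>R x k + (A k / A (Suc k)) *\<^sub>R y k;
        \<Delta> = (1 + \<mu> * A k) * A (Suc k) / (2 * a (Suc k)^2) * norm (zt - zk)^2
            + \<mu> * A k / (2 * a (Suc k)) * norm (zt - y k)^2;
        \<gamma> = gam f g \<mu> y v eps (Suc k);
        h = (\<lambda>w. f w + g w)
    in
      ereal (a (Suc k)) * \<gamma> z + ereal (A k) * \<gamma> (y k)
        = ereal (A (Suc k)) * \<gamma> zt
          + ereal (\<mu> * a (Suc k) * A k / (2 * A (Suc k)) * norm (z - y k)^2)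
    \<and> ereal (A k) * h (y k) + ereal (A (Suc k)) * Gam f g \<mu> y v eps a A (Suc k) z
          + ereal (1/2 * norm (z - x 0)^2)
        \<ge> bet f g \<mu> x y v eps a A k + ereal (A (Suc k)) * (\<gamma> zt + ereal \<Delta>)
    \<and> \<Delta> = 1 / (2 * lam (Suc k)) * (norm (zt - xt k)^2
            + \<mu> * (1 + \<mu> * A k) * lam (Suc k)^2 * A k / (a (Suc k) * A (Suc k))
              * norm (x k - y k)^2)
    \<and> ereal (A k) * h (y k) + ereal (A (Suc k)) * Gam f g \<mu> y v eps a A (Suc k) z
          + ereal (1/2 * norm (z - x 0)^2)
        \<ge> bet f g \<mu> x y v eps a A k + ereal (A (Suc k)) * h (y (Suc k))
          + ereal ((1 - \<sigma>^2) / 2 * A (Suc k) / lam (Suc k) * norm (y (Suc k) - xt k)^2)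
          + ereal (\<mu> * (1 + \<mu> * A k) * lam (Suc k) * A k / (2 * a (Suc k)) * norm (x k - y k)^2)"
      unfolding Let_def zt_def[symmetric] zk_def[symmetric] \<Delta>_def[symmetric]
      unfolding gam_eq Hk(1) Gam_Suc bet_eq hy
      using pa pc pb hp2 by simp
  qed
qed

end
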